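(* Let $g\in\mathrm{SL}_d(\mathbb{R})$ and $\mathcal{P}=\mathrm{span}_\mathbb{R}\{ge_1,\dots,ge_{d-1}\}$. Then: (1) Under the identification $X_{d-1,d}=\mathrm{SL}_d(\mathbb{R})/Q$, the subset $X_\mathcal{P}$ equals $gP/Q=\{gpQ:p\in P\}$. (2) The map $\varphi_g:\mathrm{PGL}_{d-1}(\mathbb{R})/\mathrm{PGL}_{d-1}(\mathbb{Z})\to X_\mathcal{P}$, $\mathbb{R}^\times m\,\mathrm{PGL}_{d-1}(\mathbb{Z})\mapsto g\begin{pmatrix}m&0\\0&1/\det m\end{pmatrix}Q$ ($m\in\mathrm{GL}_{d-1}(\mathbb{R})$), is a homeomorphism. (3) If $g'\in\mathrm{SL}_d(\mathbb{R})$ satisfies $gP=g'P$, then $(\varphi_g)_*\mu_{X_{d-1}}=(\varphi_{g'})_*\mu_{X_{d-1}}$, where $\mu_{X_{d-1}}$ is the $\mathrm{PGL}_{d-1}(\mathbb{R})$-invariant probability measure on $\mathrm{PGL}_{d-1}(\mathbb{R})/\mathrm{PGL}_{d-1}(\mathbb{Z})$.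
   Context: $X_{d-1,d}$ is the space of homothety classes $[\Lambda]=\{\alpha\Lambda:\alpha\in\mathbb{R}^\times\}$ of rank-$(d-1)$ discrete subgroups $\Lambda$ of $\mathbb{R}^d$, identified with $\mathrm{SL}_d(\mathbb{R})/Q$ via $gQ\mapsto[g\,\mathrm{span}_\mathbb{Z}\{e_1,\dots,e_{d-1}\}]$, where $Q=\{\begin{pmatrix}\lambda\gamma&*\\0&1/\det(\lambda\gamma)\end{pmatrix}:\lambda\in\mathbb{R}^\times,\gamma\in\mathrm{GL}_{d-1}(\mathbb{Z})\}$. $P=\{\begin{pmatrix}m&*\\0&1/\det m\end{pmatrix}:m\in\mathrm{GL}_{d-1}(\mathbb{R})\}$. For a hyperplane $\mathcal{P}$, $X_\mathcal{P}=\{[\Lambda]\in X_{d-1,d}:\Lambda\subseteq\mathcal{P}\}$. *)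

theory Defs
  imports "HOL-Probability.Probability"
begin

text \<open>The dimension d is CARD('m) + 1: we index coordinates of R^d by the
type 'm + unit, where Inl i (i :: 'm) are the first d-1 coordinates and Inr () is the
last one. A quotient G/H is represented as the set of left cosets
g H (subsets of matrices), topologised with the quotient topology of G.\<close>

type_synonym 'm mat1 = "real^'m^'m"
type_synonym 'm matd = "real^('m + unit)^('m + unit)"

abbreviation GLR :: "(real^'a^'a::finite) set" where
  "GLR \<equiv> {A. det A \<noteq> 0}"

definition SL :: "(real^'a^'a::finite) set" where
  "SL = {A. det A = 1}"

text \<open>GL_{d-1}(Z): integer matrices with integer inverse, i.e. integer entries and det = +-1.\<close>
definition GLZ :: "(real^'a^'a::finite) set" where
  "GLZ = {A. (\<forall>i j. A $ i $ j \<in> \<int>) \<and> invertible A \<and> (\<forall>i j. matrix_inv A $ i $ j \<in> \<int>)}"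

definition ulblock :: "'m::finite matd \<Rightarrow> 'm mat1" where
  "ulblock A = (\<chi> i j. A $ Inl i $ Inl j)"

definition blockdiag :: "'m::finite mat1 \<Rightarrow> 'm matd" where
  "blockdiag m = (\<chi> i j. case (i, j) of
       (Inl a, Inl b) \<Rightarrow> m $ a $ b
     | (Inr _, Inr _) \<Rightarrow> 1 / det m
     | _ \<Rightarrow> 0)"

definition Pgrp :: "'m::finite matd set" where
  "Pgrp = {A. det (ulblock A) \<noteq> 0 \<and> (\<forall>j. A $ Inr () $ Inl j = 0)
               \<and> A $ Inr () $ Inr () = 1 / det (ulblock A)}"

definition Qgrp :: "'m::finite matd set" where
  "Qgrp = {A. (\<exists>l \<gamma>. l \<noteq> 0 \<and> \<gamma> \<in> GLZ \<and> ulblock A = l *\<^sub>R \<gamma>)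
               \<and> (\<forall>j. A $ Inr () $ Inl j = 0)
               \<and> A $ Inr () $ Inr () = 1 / det (ulblock A)}"

text \<open>R^x GL_{d-1}(Z) inside GL_{d-1}(R): the preimage of PGL_{d-1}(Z) in GL_{d-1}(R).\<close>
definition Hgrp :: "(real^'a^'a::finite) set" where
  "Hgrp = {l *\<^sub>R \<gamma> | l \<gamma>. l \<noteq> 0 \<and> \<gamma> \<in> GLZ}"

definition lcoset :: "real^'a^'a::finite \<Rightarrow> (real^'a^'a) set \<Rightarrow> (real^'a^'a) set" where
  "lcoset g H = (\<lambda>h. g ** h) ` H"

definition quot_top :: "'a topology \<Rightarrow> ('a \<Rightarrow> 'b) \<Rightarrow> 'b topology" where
  "quot_top X f = topology (\<lambda>U. U \<subseteq> f ` topspace X \<and> openin X {x \<in> topspace X. f x \<in> U})"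

text \<open>X_{d-1} = PGL_{d-1}(R)/PGL_{d-1}(Z), realised as GL_{d-1}(R)/(R^x GL_{d-1}(Z)):
the coset R^x m PGL_{d-1}(Z) corresponds to the set m (R^x GL_{d-1}(Z)).\<close>
definition Xlow :: "(real^'a^'a::finite) set topology" where
  "Xlow = quot_top (subtopology euclidean GLR) (\<lambda>m. lcoset m Hgrp)"

definition Xdd :: "'m::finite matd set topology" where
  "Xdd = quot_top (subtopology euclidean SL) (\<lambda>g. lcoset g Qgrp)"

definition Lambda0 :: "(real^('m::finite + unit)) set" where
  "Lambda0 = {(\<Sum>i\<in>UNIV. real_of_int (c i) *\<^sub>R axis (Inl i) 1) | c. True}"

definition hclass :: "('a::real_vector) set \<Rightarrow> 'a set set" where
  "hclass L = {(\<lambda>v. \<alpha> *\<^sub>R v) ` L | \<alpha>. \<alpha> \<noteq> 0}"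

definition ident :: "'m::finite matd set \<Rightarrow> (real^('m + unit)) set set" where
  "ident c = hclass ((\<lambda>v. (SOME g. g \<in> c) *v v) ` Lambda0)"

text \<open>X_P, viewed inside SL_d(R)/Q via the identification: cosets whose lattice class
consists of subgroups contained in the hyperplane P.\<close>
definition XP :: "(real^('m::finite + unit)) set \<Rightarrow> 'm matd set set" where
  "XP Hyp = {c \<in> topspace Xdd. \<forall>L \<in> ident c. L \<subseteq> Hyp}"

definition phi :: "'m::finite matd \<Rightarrow> 'm mat1 set \<Rightarrow> 'm matd set" where
  "phi g c = lcoset (g ** blockdiag (SOME m. m \<in> c)) Qgrp"

definition borel_of_top :: "'a topology \<Rightarrow> 'a measure" where
  "borel_of_top X = sigma (topspace X) {U. openin X U}"

end

theory Submission
  imports Defs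
begin

lemma sign_map_sum:
  fixes q :: "'m::finite \<Rightarrow> 'm"
  assumes "q permutes UNIV"
  shows "sign (map_sum q (id::unit\<Rightarrow>unit)) = sign q"
  using assms finite_class.finite_UNIV[where 'a='m]
proof (induction rule: permutes_induct)
  case id
  have "map_sum (id::'m\<Rightarrow>'m) (id::unit\<Rightarrow>unit) = id" by (rule ext, case_tac x) auto
  then show ?case by (metis sign_id)
next
  case (swap a b p)
  have e: "map_sum (Transposition.transpose a b \<circ> p) (id::unit\<Rightarrow>unit)
        = Transposition.transpose (Inl a) (Inl b) \<circ> map_sum p id"
    by (rule ext, case_tac x) (auto simp: Transposition.transpose_def)
  have pperm: "p permutes UNIV" using swap by auto
  have pp: "permutation p" unfolding permutation_permutes by (rule exI[of _ UNIV]) (simp add: pperm)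
  have pp2: "permutation (map_sum p (id::unit\<Rightarrow>unit))"
  proof -
    have b: "bij (map_sum p (id::unit\<Rightarrow>unit))"
    proof (rule o_bij[where g="map_sum (inv p) id"])
      show "map_sum (inv p) id \<circ> map_sum p (id::unit\<Rightarrow>unit) = id"
        by (rule ext, case_tac x) (auto simp: permutes_inverses(2)[OF pperm])
      show "map_sum p (id::unit\<Rightarrow>unit) \<circ> map_sum (inv p) id = id"
        by (rule ext, case_tac x) (auto simp: permutes_inverses(1)[OF pperm])
    qed
    have "map_sum p (id::unit\<Rightarrow>unit) permutes UNIV"
      using b by (intro bij_imp_permutes) auto
    then show ?thesis unfolding permutation_permutes by (intro exI[of _ UNIV]) simp
  qed
  have s1: "sign (Transposition.transpose (Inl a) (Inl b) \<circ> map_sum p (id::unit\<Rightarrow>unit))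
      = sign (Transposition.transpose (Inl a) (Inl b) :: 'm+unit \<Rightarrow> _) * sign (map_sum p (id::unit\<Rightarrow>unit))"
    by (rule sign_compose[OF permutation_swap_id pp2])
  have s2: "sign (Transposition.transpose a b \<circ> p) = sign (Transposition.transpose a b) * sign p"
    by (rule sign_compose[OF permutation_swap_id pp])
  have idu: "(id::unit\<Rightarrow>unit) = (\<lambda>a. ())" by (rule ext) simp
  show ?case unfolding e s1 s2 using swap by (simp add: sign_swap_id idu)
qed

lemma map_sum_permutes:
  fixes q :: "'m::finite \<Rightarrow> 'm"
  assumes "q permutes UNIV"
  shows "map_sum q (id::unit\<Rightarrow>unit) permutes UNIV"
proof -
  have b: "bij (map_sum q (id::unit\<Rightarrow>unit))"
  proof (rule o_bij[where g="map_sum (inv q) id"])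
    show "map_sum (inv q) id \<circ> map_sum q (id::unit\<Rightarrow>unit) = id"
      by (rule ext, case_tac x) (auto simp: permutes_inverses(2)[OF assms])
    show "map_sum q (id::unit\<Rightarrow>unit) \<circ> map_sum (inv q) id = id"
      by (rule ext, case_tac x) (auto simp: permutes_inverses(1)[OF assms])
  qed
  then show ?thesis by (intro bij_imp_permutes) auto
qed

lemma det_ub:
  fixes A :: "'m::finite matd"
  assumes z: "\<forall>j. A $ Inr () $ Inl j = 0"
  shows "det A = det (ulblock A) * A $ Inr () $ Inr ()"
proof -
  let ?S = "{p. p permutes (UNIV::('m+unit) set)}"
  let ?T = "{p. p permutes (UNIV::('m+unit) set) \<and> p (Inr ()) = Inr ()}"
  let ?f = "\<lambda>p. of_int (sign p) * (\<Prod>i\<in>UNIV. A$i$p i)"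
  let ?e = "\<lambda>q::'m\<Rightarrow>'m. map_sum q (id::unit\<Rightarrow>unit)"
  have "det A = sum ?f ?S" unfolding det_def by simp
  also have "\<dots> = sum ?f ?T"
  proof (rule sum.mono_neutral_right)
    show "finite ?S" by (simp add: finite_permutations)
    show "?T \<subseteq> ?S" by auto
    show "\<forall>p\<in>?S - ?T. ?f p = 0"
    proof
      fix p assume p: "p \<in> ?S - ?T"
      then obtain j where j: "p (Inr ()) = Inl j"
        by (cases "p (Inr ())") auto
      have "(\<Prod>i\<in>UNIV. A$i$p i) = 0"
        by (rule prod_zero) (use j z in \<open>auto intro!: exI[of _ "Inr ()"]\<close>)
      then show "?f p = 0" by simp
    qed
  qed
  also have "?T = ?e ` {q. q permutes UNIV}"
  proof
    show "?e ` {q. q permutes UNIV} \<subseteq> ?T"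
      using map_sum_permutes by auto
    show "?T \<subseteq> ?e ` {q. q permutes UNIV}"
    proof
      fix p assume p: "p \<in> ?T"
      then have pp: "p permutes UNIV" and pr: "p (Inr ()) = Inr ()" by auto
      have inl: "\<exists>b. p (Inl a) = Inl b" for a
      proof (cases "p (Inl a)")
        case (Inr u)
        then have "p (Inl a) = p (Inr ())" using pr by simp
        then show ?thesis using permutes_inj[OF pp] by (auto dest: injD)
      qed auto
      define q where "q a = projl (p (Inl a))" for a
      have pq: "p (Inl a) = Inl (q a)" for a
        using inl[of a] unfolding q_def by auto
      have ep: "?e q = p"
        by (rule ext, case_tac x) (auto simp: pq pr)
      have "inj q"
      proof (rule injI)
        fix a b assume "q a = q b"
        then have "p (Inl a) = p (Inl b)" by (simp add: pq)
        then show "a = b" using permutes_inj[OF pp] by (auto dest: injD)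
      qed
      then have "bij q" using finite_UNIV_inj_surj[of q] by (simp add: bij_def)
      then have "q permutes UNIV" by (intro bij_imp_permutes) auto
      then show "p \<in> ?e ` {q. q permutes UNIV}" using ep by blast
    qed
  qed
  also have "sum ?f (?e ` {q. q permutes UNIV}) = sum (?f \<circ> ?e) {q. q permutes UNIV}"
  proof (rule sum.reindex)
    show "inj_on ?e {q. q permutes UNIV}"
    proof (rule inj_onI)
      fix q q' :: "'m \<Rightarrow> 'm"
      assume "?e q = ?e q'"
      then have "?e q (Inl a) = ?e q' (Inl a)" for a by simp
      then show "q = q'" by (auto intro: ext)
    qed
  qed
  also have "\<dots> = sum (\<lambda>q. of_int (sign q) * (\<Prod>a\<in>UNIV. A$Inl a$Inl (q a)) * A $ Inr () $ Inr ()) {q. q permutes UNIV}"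
  proof (rule sum.cong[OF refl])
    fix q :: "'m \<Rightarrow> 'm" assume q: "q \<in> {q. q permutes UNIV}"
    have "(\<Prod>i\<in>(UNIV::('m+unit) set). A$i$?e q i) = (\<Prod>i\<in>(UNIV <+> UNIV). A$i$?e q i)"
      by simp
    also have "\<dots> = (\<Prod>a\<in>UNIV. A$Inl a$Inl (q a)) * A $ Inr () $ Inr ()"
      by (subst prod.Plus) (auto simp: UNIV_unit)
    finally show "(?f \<circ> ?e) q = of_int (sign q) * (\<Prod>a\<in>UNIV. A$Inl a$Inl (q a)) * A $ Inr () $ Inr ()"
      using sign_map_sum[of q] q by simp
  qed
  also have "\<dots> = det (ulblock A) * A $ Inr () $ Inr ()"
    unfolding det_def ulblock_def by (simp add: sum_distrib_right)
  finally show ?thesis .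
qed

lemma sum_plus_unit:
  "(\<Sum>k\<in>(UNIV::('m::finite+unit) set). f k) = (\<Sum>a\<in>UNIV. f (Inl a)) + f (Inr ())"
proof -
  have "(\<Sum>k\<in>(UNIV::('m::finite+unit) set). f k) = (\<Sum>k\<in>(UNIV <+> UNIV). f k)" by simp
  also have "\<dots> = (\<Sum>a\<in>UNIV. f (Inl a)) + f (Inr ())"
    by (subst sum.Plus) (auto simp: UNIV_unit)
  finally show ?thesis .
qed

lemma ulblock_mult:
  fixes A B :: "'m::finite matd"
  assumes "\<forall>j. B $ Inr () $ Inl j = 0"
  shows "ulblock (A ** B) = ulblock A ** ulblock B"
  using assms unfolding ulblock_def matrix_matrix_mult_def by (simp add: vec_eq_iff sum_plus_unit)

lemma ub_mult:
  fixes A B :: "'m::finite matd"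
  assumes "\<forall>j. A $ Inr () $ Inl j = 0" "\<forall>j. B $ Inr () $ Inl j = 0"
  shows "\<forall>j. (A ** B) $ Inr () $ Inl j = 0"
  using assms unfolding matrix_matrix_mult_def by (simp add: sum_plus_unit)

lemma corner_mult:
  fixes A B :: "'m::finite matd"
  assumes "\<forall>j. A $ Inr () $ Inl j = 0"
  shows "(A ** B) $ Inr () $ Inr () = A $ Inr () $ Inr () * B $ Inr () $ Inr ()"
  using assms unfolding matrix_matrix_mult_def by (simp add: sum_plus_unit)

lemma ulblock_one: "ulblock (mat 1 :: 'm::finite matd) = mat 1"
  unfolding ulblock_def mat_def by (simp add: vec_eq_iff)

lemma minv:
  fixes A :: "real^'n::finite^'n"
  assumes "det A \<noteq> 0"
  shows "A ** matrix_inv A = mat 1" "matrix_inv A ** A = mat 1"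
proof -
  have "invertible A" using assms invertible_det_nz by blast
  then have "\<exists>A'. A ** A' = mat 1 \<and> A' ** A = mat 1" unfolding invertible_def .
  then have "A ** matrix_inv A = mat 1 \<and> matrix_inv A ** A = mat 1"
    unfolding matrix_inv_def by (rule someI_ex)
  then show "A ** matrix_inv A = mat 1" "matrix_inv A ** A = mat 1" by auto
qed

lemma minv_unique:
  fixes A B :: "real^'n::finite^'n"
  assumes "A ** B = mat 1"
  shows "matrix_inv A = B"
proof -
  have "invertible A" using assms invertible_right_inverse by blast
  then have d: "det A \<noteq> 0" using invertible_det_nz by blast
  have "matrix_inv A = matrix_inv A ** (A ** B)" using assms by simp
  also have "\<dots> = B" by (simp add: matrix_mul_assoc minv(2)[OF d])
  finally show ?thesis .
qed

lemma det_minv: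
  fixes A :: "real^'n::finite^'n"
  assumes "det A \<noteq> 0"
  shows "det (matrix_inv A) = 1 / det A"
proof -
  have "det A * det (matrix_inv A) = 1"
    using minv(1)[OF assms] det_mul[of A "matrix_inv A"] by simp
  then show ?thesis using assms by (simp add: field_simps)
qed

lemma minv_mult:
  fixes A B :: "real^'n::finite^'n"
  assumes "det A \<noteq> 0" "det B \<noteq> 0"
  shows "matrix_inv (A ** B) = matrix_inv B ** matrix_inv A"
proof (rule minv_unique)
  have "A ** B ** (matrix_inv B ** matrix_inv A) = A ** (B ** matrix_inv B) ** matrix_inv A"
    by (simp add: matrix_mul_assoc)
  then show "A ** B ** (matrix_inv B ** matrix_inv A) = mat 1"
    by (simp add: minv assms)
qed

lemma minv_minv:
  fixes A :: "real^'n::finite^'n"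
  assumes "det A \<noteq> 0"
  shows "matrix_inv (matrix_inv A) = A"
  by (rule minv_unique) (simp add: minv assms)

lemma minv_scale:
  fixes A :: "real^'n::finite^'n"
  assumes "det A \<noteq> 0" "l \<noteq> 0"
  shows "matrix_inv (l *\<^sub>R A) = (1/l) *\<^sub>R matrix_inv A"
proof (rule minv_unique)
  have "(l *\<^sub>R A) ** ((1/l) *\<^sub>R matrix_inv A) = (l * (1/l)) *\<^sub>R (A ** matrix_inv A)"
    by (simp add: matrix_scalar_ac scalar_matrix_assoc[symmetric])
  then show "(l *\<^sub>R A) ** ((1/l) *\<^sub>R matrix_inv A) = mat 1"
    using assms by (simp add: minv)
qed

lemma det_scale_nz:
  fixes A :: "real^'n::finite^'n"
  assumes "det A \<noteq> 0" "l \<noteq> 0"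
  shows "det (l *\<^sub>R A) \<noteq> 0"
  using assms scalar_invertible invertible_det_nz by blast

lemma zero_vmult: "(0::real^'n::finite) v* (B::real^'k::finite^'n) = 0"
  by (simp add: vector_matrix_mult_def vec_eq_iff)

lemma ub_inv:
  fixes A :: "'m::finite matd"
  assumes z: "\<forall>j. A $ Inr () $ Inl j = 0" and d: "det A \<noteq> 0"
  shows "\<forall>j. matrix_inv A $ Inr () $ Inl j = 0"
    and "ulblock (matrix_inv A) = matrix_inv (ulblock A)"
    and "det (ulblock A) \<noteq> 0"
proof -
  show du: "det (ulblock A) \<noteq> 0" using d det_ub[OF z] by auto
  let ?X = "matrix_inv A"
  have XA: "?X ** A = mat 1" by (rule minv(2)[OF d])
  have "ulblock ?X ** ulblock A = mat 1"
    using ulblock_mult[OF z, of ?X] XA ulblock_one by metis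
  then have "ulblock A ** ulblock ?X = mat 1" using matrix_left_right_inverse by blast
  then show "ulblock ?X = matrix_inv (ulblock A)" using minv_unique by metis
  define r where "r = (\<chi> a. ?X $ Inr () $ Inl a)"
  have "(?X ** A) $ Inr () $ Inl j = 0" for j using XA by (simp add: mat_def)
  then have "r v* ulblock A = 0"
    using z unfolding r_def matrix_matrix_mult_def vector_matrix_mult_def ulblock_def
    by (simp add: vec_eq_iff sum_plus_unit)
  then have "r = 0"
    by (metis minv(1)[OF du] vector_matrix_mul_assoc vector_matrix_mul_rid zero_vmult)
  then show "\<forall>j. matrix_inv A $ Inr () $ Inl j = 0"
    unfolding r_def by (simp add: vec_eq_iff)
qed

lemma GLZ_det: "\<gamma> \<in> GLZ \<Longrightarrow> det (\<gamma>::real^'n::finite^'n) \<noteq> 0"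
  unfolding GLZ_def using invertible_det_nz by blast

lemma GLZ_one: "(mat 1 :: real^'n::finite^'n) \<in> GLZ"
proof -
  have i: "matrix_inv (mat 1 :: real^'n^'n) = mat 1" by (rule minv_unique) simp
  have inv: "invertible (mat 1 :: real^'n^'n)" unfolding invertible_def by (rule exI[of _ "mat 1"]) simp
  have e: "\<forall>i j. (mat 1 :: real^'n^'n) $ i $ j \<in> \<int>" by (simp add: mat_def)
  show ?thesis by (simp add: GLZ_def i inv e)
qed

lemma GLZ_mult:
  assumes "\<gamma> \<in> GLZ" "\<delta> \<in> GLZ"
  shows "(\<gamma> ** \<delta> :: real^'n::finite^'n) \<in> GLZ"
proof -
  have d: "det \<gamma> \<noteq> 0" "det \<delta> \<noteq> 0" using assms GLZ_det by auto
  have ints: "(X ** Y) $ i $ j \<in> \<int>" if "\<forall>i j. X $ i $ j \<in> \<int>" "\<forall>i j. Y $ i $ j \<in> \<int>"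
    for X Y :: "real^'n^'n" and i j
    using that unfolding matrix_matrix_mult_def by (auto intro!: Ints_sum Ints_mult)
  show ?thesis using assms unfolding GLZ_def
    by (auto simp: minv_mult d invertible_mult intro!: ints)
qed

lemma GLZ_inv:
  assumes "\<gamma> \<in> GLZ"
  shows "matrix_inv (\<gamma> :: real^'n::finite^'n) \<in> GLZ"
proof -
  have d: "det \<gamma> \<noteq> 0" using assms GLZ_det by auto
  have "det (matrix_inv \<gamma>) \<noteq> 0" using det_minv[OF d] d by simp
  then have "invertible (matrix_inv \<gamma>)" using invertible_det_nz by blast
  then show ?thesis using assms unfolding GLZ_def by (simp add: minv_minv d)
qed

definition mgroup :: "(real^'n::finite^'n) set \<Rightarrow> bool" where
  "mgroup G \<longleftrightarrow> mat 1 \<in> G \<and> (\<forall>x\<in>G. \<forall>y\<in>G. x ** y \<in> G) \<and> (\<forall>x\<in>G. det x \<noteq> 0 \<and> matrix_inv x \<in> G)"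

lemma H_det: "x \<in> Hgrp \<Longrightarrow> det (x::real^'n::finite^'n) \<noteq> 0"
  unfolding Hgrp_def using GLZ_det det_scale_nz by blast

lemma HgrpE:
  assumes "x \<in> (Hgrp::(real^'n::finite^'n) set)"
  obtains l \<gamma> where "x = l *\<^sub>R \<gamma>" "l \<noteq> 0" "\<gamma> \<in> GLZ"
  using assms unfolding Hgrp_def by blast

lemma HgrpI:
  assumes "l \<noteq> 0" "\<gamma> \<in> GLZ"
  shows "l *\<^sub>R (\<gamma>::real^'n::finite^'n) \<in> Hgrp"
  using assms unfolding Hgrp_def by blast

lemma mgroup_H: "mgroup (Hgrp :: (real^'n::finite^'n) set)"
proof -
  have "mat 1 = (1::real) *\<^sub>R (mat 1::real^'n^'n)" by simp
  then have "mat 1 \<in> (Hgrp :: (real^'n^'n) set)"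
    using GLZ_one HgrpI[of 1 "mat 1"] by simp
  moreover have "x ** y \<in> Hgrp" if "x \<in> Hgrp" "y \<in> Hgrp" for x y :: "real^'n^'n"
  proof -
    obtain l \<gamma> where x: "x = l *\<^sub>R \<gamma>" "l \<noteq> 0" "\<gamma> \<in> GLZ" using \<open>x \<in> Hgrp\<close> by (rule HgrpE)
    obtain k \<delta> where y: "y = k *\<^sub>R \<delta>" "k \<noteq> 0" "\<delta> \<in> GLZ" using \<open>y \<in> Hgrp\<close> by (rule HgrpE)
    have "x ** y = (l * k) *\<^sub>R (\<gamma> ** \<delta>)"
      unfolding x y by (simp add: matrix_scalar_ac scalar_matrix_assoc[symmetric])
    then show ?thesis using x y by (auto intro!: HgrpI GLZ_mult)
  qed
  moreover have "det x \<noteq> 0 \<and> matrix_inv x \<in> Hgrp" if "x \<in> Hgrp" for x :: "real^'n^'n"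
  proof -
    obtain l \<gamma> where x: "x = l *\<^sub>R \<gamma>" "l \<noteq> 0" "\<gamma> \<in> GLZ" using \<open>x \<in> Hgrp\<close> by (rule HgrpE)
    have "matrix_inv x = (1/l) *\<^sub>R matrix_inv \<gamma>" unfolding x using x minv_scale GLZ_det by blast
    moreover have "(1/l) *\<^sub>R matrix_inv \<gamma> \<in> Hgrp" using x by (auto intro!: HgrpI GLZ_inv)
    ultimately show ?thesis using that H_det by simp
  qed
  ultimately show ?thesis unfolding mgroup_def by blast
qed

lemma lcoset_self: "mgroup G \<Longrightarrow> A \<in> lcoset A G"
  unfolding mgroup_def lcoset_def by (auto intro!: image_eqI[of _ _ "mat 1"])

lemma lcoset_right:
  assumes "mgroup G" "x \<in> G"
  shows "lcoset (A ** x) G = lcoset A G"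
proof
  show "lcoset (A ** x) G \<subseteq> lcoset A G"
    using assms unfolding mgroup_def lcoset_def by (auto simp: matrix_mul_assoc[symmetric])
  show "lcoset A G \<subseteq> lcoset (A ** x) G"
  proof
    fix z assume "z \<in> lcoset A G"
    then obtain y where y: "y \<in> G" "z = A ** y" unfolding lcoset_def by auto
    have d: "det x \<noteq> 0" "matrix_inv x \<in> G" using assms unfolding mgroup_def by auto
    have "z = (A ** x) ** (matrix_inv x ** y)"
      using y by (simp add: matrix_mul_assoc[symmetric]) (simp add: matrix_mul_assoc minv d)
    moreover have "matrix_inv x ** y \<in> G" using assms d y unfolding mgroup_def by auto
    ultimately show "z \<in> lcoset (A ** x) G" unfolding lcoset_def by auto
  qed
qed

lemma lcoset_memE:
  assumes "B \<in> lcoset A G"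
  obtains x where "x \<in> G" "B = A ** x"
  using assms unfolding lcoset_def by auto

lemma lcoset_mem:
  assumes "mgroup G" "B \<in> lcoset A G"
  shows "lcoset B G = lcoset A G"
proof -
  obtain x where "x \<in> G" "B = A ** x" using assms(2) by (rule lcoset_memE)
  then show ?thesis using lcoset_right[OF assms(1)] by simp
qed

lemma lcoset_eq_iff:
  assumes "mgroup G" "det A \<noteq> 0"
  shows "lcoset A G = lcoset B G \<longleftrightarrow> matrix_inv A ** B \<in> G"
proof
  assume "lcoset A G = lcoset B G"
  then have "B \<in> lcoset A G" using lcoset_self[OF assms(1), of B] by simp
  then obtain x where "x \<in> G" "B = A ** x" by (rule lcoset_memE)
  then show "matrix_inv A ** B \<in> G" by (simp add: matrix_mul_assoc minv assms)
next
  assume a: "matrix_inv A ** B \<in> G"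
  have "B = A ** (matrix_inv A ** B)" by (simp add: matrix_mul_assoc minv assms)
  then show "lcoset A G = lcoset B G" using lcoset_right[OF assms(1) a, of A] by simp
qed

lemma lcoset_lcoset: "lcoset h (lcoset m G) = lcoset (h ** m) G"
  unfolding lcoset_def by (auto simp: image_image matrix_mul_assoc)

lemma Pgrp_iff:
  fixes A :: "'m::finite matd"
  shows "A \<in> Pgrp \<longleftrightarrow> (\<forall>j. A $ Inr () $ Inl j = 0) \<and> det A = 1"
proof
  assume A: "A \<in> Pgrp"
  then show "(\<forall>j. A $ Inr () $ Inl j = 0) \<and> det A = 1"
    unfolding Pgrp_def using det_ub[of A] by auto
next
  assume A: "(\<forall>j. A $ Inr () $ Inl j = 0) \<and> det A = 1"
  then have h: "det (ulblock A) * A $ Inr () $ Inr () = 1" using det_ub[of A] by auto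
  then have d: "det (ulblock A) \<noteq> 0" by auto
  then have "A $ Inr () $ Inr () = 1 / det (ulblock A)" using h by (simp add: field_simps)
  then show "A \<in> Pgrp" unfolding Pgrp_def using A d by auto
qed

lemma Qgrp_iff:
  fixes A :: "'m::finite matd"
  shows "A \<in> Qgrp \<longleftrightarrow> A \<in> Pgrp \<and> ulblock A \<in> Hgrp"
proof
  assume A: "A \<in> Qgrp"
  then have H: "ulblock A \<in> Hgrp" unfolding Qgrp_def Hgrp_def by auto
  then have "det (ulblock A) \<noteq> 0" by (rule H_det)
  then show "A \<in> Pgrp \<and> ulblock A \<in> Hgrp" using A H unfolding Qgrp_def Pgrp_def by auto
next
  assume "A \<in> Pgrp \<and> ulblock A \<in> Hgrp"
  then show "A \<in> Qgrp" unfolding Qgrp_def Pgrp_def Hgrp_def by auto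
qed

lemma mgroup_P: "mgroup (Pgrp :: 'm::finite matd set)"
proof -
  have "\<forall>j. (mat 1 :: 'm matd) $ Inr () $ Inl j = 0" by (simp add: mat_def)
  then have "mat 1 \<in> (Pgrp :: 'm matd set)" unfolding Pgrp_iff by simp
  moreover have "x ** y \<in> Pgrp" if "x \<in> Pgrp" "y \<in> Pgrp" for x y :: "'m matd"
    using that unfolding Pgrp_iff by (simp add: ub_mult det_mul)
  moreover have "det x \<noteq> 0 \<and> matrix_inv x \<in> Pgrp" if "x \<in> Pgrp" for x :: "'m matd"
    using that unfolding Pgrp_iff by (simp add: ub_inv det_minv)
  ultimately show ?thesis unfolding mgroup_def by blast
qed

lemma mgroup_Q: "mgroup (Qgrp :: 'm::finite matd set)"
proof -
  have H: "mgroup (Hgrp :: 'm mat1 set)" by (rule mgroup_H)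
  have P: "mgroup (Pgrp :: 'm matd set)" by (rule mgroup_P)
  have "mat 1 \<in> (Qgrp :: 'm matd set)" unfolding Qgrp_iff using H P by (simp add: ulblock_one mgroup_def)
  moreover have "x ** y \<in> Qgrp" if "x \<in> Qgrp" "y \<in> Qgrp" for x y :: "'m matd"
  proof -
    have "ulblock (x ** y) = ulblock x ** ulblock y"
      using that by (intro ulblock_mult) (simp add: Qgrp_iff Pgrp_iff)
    then show ?thesis using that H P unfolding Qgrp_iff mgroup_def by simp
  qed
  moreover have "det x \<noteq> 0 \<and> matrix_inv x \<in> Qgrp" if "x \<in> Qgrp" for x :: "'m matd"
  proof -
    have x: "x \<in> Pgrp" "ulblock x \<in> Hgrp" using that unfolding Qgrp_iff by auto
    have d: "det x \<noteq> 0" using x unfolding Pgrp_iff by simp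
    have "ulblock (matrix_inv x) = matrix_inv (ulblock x)"
      using x d by (intro ub_inv) (simp_all add: Pgrp_iff)
    then show ?thesis using x d H P unfolding Qgrp_iff mgroup_def by simp
  qed
  ultimately show ?thesis unfolding mgroup_def by blast
qed

lemma bd_ub: "\<forall>j. blockdiag m $ Inr () $ Inl j = 0"
  unfolding blockdiag_def by simp

lemma bd_ul: "ulblock (blockdiag m) = m"
  unfolding blockdiag_def ulblock_def by (simp add: vec_eq_iff)

lemma bd_corner: "blockdiag m $ Inr () $ Inr () = 1 / det m"
  unfolding blockdiag_def by simp

lemma bd_P: "det m \<noteq> 0 \<Longrightarrow> blockdiag m \<in> Pgrp"
  unfolding Pgrp_def by (simp add: bd_ul bd_corner bd_ub)

lemma KEY:
  fixes g X Y :: "'m::finite matd"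
  assumes g: "det g \<noteq> 0" and X: "X \<in> Pgrp" and Y: "Y \<in> Pgrp"
  shows "lcoset (g ** X) Qgrp = lcoset (g ** Y) Qgrp \<longleftrightarrow> matrix_inv (ulblock X) ** ulblock Y \<in> Hgrp"
proof -
  have P: "mgroup (Pgrp :: 'm matd set)" by (rule mgroup_P)
  have dX: "det X \<noteq> 0" using X unfolding Pgrp_iff by simp
  have zX: "\<forall>j. X $ Inr () $ Inl j = 0" using X unfolding Pgrp_iff by simp
  have zY: "\<forall>j. Y $ Inr () $ Inl j = 0" using Y unfolding Pgrp_iff by simp
  have dgX: "det (g ** X) \<noteq> 0" using g dX by (simp add: det_mul)
  have "matrix_inv (g ** X) ** (g ** Y) = matrix_inv X ** (matrix_inv g ** g) ** Y"
    by (simp add: minv_mult g dX matrix_mul_assoc)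
  also have "\<dots> = matrix_inv X ** Y" by (simp add: minv g)
  finally have e: "matrix_inv (g ** X) ** (g ** Y) = matrix_inv X ** Y" .
  have Z: "matrix_inv X ** Y \<in> Pgrp" using P X Y unfolding mgroup_def by blast
  have u: "ulblock (matrix_inv X ** Y) = matrix_inv (ulblock X) ** ulblock Y"
    using ulblock_mult[OF zY] ub_inv(2)[OF zX dX] by simp
  show ?thesis
    unfolding lcoset_eq_iff[OF mgroup_Q dgX] e Qgrp_iff u using Z by simp
qed

lemma istop_quot: "istopology (\<lambda>U. U \<subseteq> f ` topspace X \<and> openin X {x \<in> topspace X. f x \<in> U})"
  unfolding istopology_def
proof (rule conjI; intro allI impI)
  fix S T assume S: "S \<subseteq> f ` topspace X \<and> openin X {x \<in> topspace X. f x \<in> S}"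
    and T: "T \<subseteq> f ` topspace X \<and> openin X {x \<in> topspace X. f x \<in> T}"
  have "{x \<in> topspace X. f x \<in> S \<inter> T} = {x \<in> topspace X. f x \<in> S} \<inter> {x \<in> topspace X. f x \<in> T}" by auto
  then show "S \<inter> T \<subseteq> f ` topspace X \<and> openin X {x \<in> topspace X. f x \<in> S \<inter> T}"
    using S T by auto
next
  fix K assume K: "\<forall>S\<in>K. S \<subseteq> f ` topspace X \<and> openin X {x \<in> topspace X. f x \<in> S}"
  have "{x \<in> topspace X. f x \<in> \<Union>K} = \<Union>((\<lambda>S. {x \<in> topspace X. f x \<in> S}) ` K)" by auto
  then show "\<Union>K \<subseteq> f ` topspace X \<and> openin X {x \<in> topspace X. f x \<in> \<Union>K}"
    using K by (auto intro!: openin_Union)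
qed

lemma openin_quot:
  "openin (quot_top X f) U \<longleftrightarrow> U \<subseteq> f ` topspace X \<and> openin X {x \<in> topspace X. f x \<in> U}"
proof -
  have "openin (quot_top X f) = (\<lambda>U. U \<subseteq> f ` topspace X \<and> openin X {x \<in> topspace X. f x \<in> U})"
    unfolding quot_top_def by (rule topology_inverse'[OF istop_quot])
  then show ?thesis by simp
qed

lemma topspace_quot: "topspace (quot_top X f) = f ` topspace X"
proof -
  have "{x \<in> topspace X. f x \<in> f ` topspace X} = topspace X" by auto
  then have "openin (quot_top X f) (f ` topspace X)"
    unfolding openin_quot by auto
  moreover have "U \<subseteq> f ` topspace X" if "openin (quot_top X f) U" for U
    using that unfolding openin_quot by auto
  ultimately show ?thesis unfolding topspace_def by blast
qed

lemma cont_quot: "continuous_map X (quot_top X f) f"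
  unfolding continuous_map_def topspace_quot
proof (intro conjI allI impI)
  show "f \<in> topspace X \<rightarrow> f ` topspace X" by auto
  fix U assume "openin (quot_top X f) U"
  then show "openin X {x \<in> topspace X. f x \<in> U}" unfolding openin_quot by auto
qed

lemma cont_from_quot:
  assumes "continuous_map X Y (\<lambda>x. k (f x))"
  shows "continuous_map (quot_top X f) Y k"
  unfolding continuous_map_def topspace_quot
proof (intro conjI allI impI)
  show "k \<in> f ` topspace X \<rightarrow> topspace Y"
    using assms unfolding continuous_map_def by auto
  fix U assume U: "openin Y U"
  have "{x \<in> topspace X. f x \<in> {z \<in> f ` topspace X. k z \<in> U}} = {x \<in> topspace X. k (f x) \<in> U}"
    by auto
  moreover have "openin X {x \<in> topspace X. k (f x) \<in> U}"
    using assms U unfolding continuous_map_def by auto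
  ultimately show "openin (quot_top X f) {z \<in> f ` topspace X. k z \<in> U}"
    unfolding openin_quot by auto
qed

lemma cont_det:
  fixes F :: "'a::topological_space \<Rightarrow> real^'n::finite^'n"
  assumes "continuous_on S F"
  shows "continuous_on S (\<lambda>x. det (F x))"
  unfolding det_def by (intro continuous_intros assms)

lemma cont_bd_entry:
  "continuous_on GLR (\<lambda>m::'m::finite mat1. blockdiag m $ k $ j)"
proof (cases k; cases j)
  fix a b assume "k = Inl a" "j = Inl b"
  then show ?thesis unfolding blockdiag_def by (simp add: continuous_intros)
next
  fix a b assume "k = Inr a" "j = Inr b"
  then show ?thesis unfolding blockdiag_def
    by (auto intro!: continuous_intros cont_det)
qed (simp_all add: blockdiag_def)

lemma cont_g_bd:
  "continuous_on GLR (\<lambda>m::'m::finite mat1. g ** blockdiag m)"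
  unfolding matrix_matrix_mult_def
  by (intro continuous_intros cont_bd_entry)

lemma cont_lmult:
  "continuous_on S (\<lambda>m::real^'n::finite^'n. a ** m)"
  unfolding matrix_matrix_mult_def
  by (intro continuous_intros)

lemma cont_ulb:
  "continuous_on S (\<lambda>h::'m::finite matd. ulblock (a ** h))"
  unfolding matrix_matrix_mult_def ulblock_def
  by (intro continuous_intros)

lemma open_GLR: "open (GLR :: (real^'n::finite^'n) set)"
  using open_Collect_neq[of "\<lambda>x::real^'n^'n. det x" "\<lambda>x. 0"]
  by (simp add: cont_det[OF continuous_on_id, simplified continuous_on_eq_continuous_at])

lemma topspace_Xdd: "topspace (Xdd :: 'm::finite matd set topology) = (\<lambda>h. lcoset h Qgrp) ` SL"
  unfolding Xdd_def topspace_quot by simp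

lemma topspace_Xlow: "topspace (Xlow :: (real^'n::finite^'n) set topology) = (\<lambda>m. lcoset m Hgrp) ` GLR"
  unfolding Xlow_def topspace_quot by simp

lemma span_Inl_sub: "span ((\<lambda>i. axis (Inl i) 1) ` (UNIV::'m::finite set)) \<subseteq> {x::real^('m+unit). x $ Inr () = 0}"
proof (rule span_minimal)
  show "(\<lambda>i. axis (Inl i) 1) ` (UNIV::'m set) \<subseteq> {x::real^('m+unit). x $ Inr () = 0}"
    by (auto simp: axis_def)
  show "subspace {x::real^('m+unit). x $ Inr () = 0}"
    unfolding subspace_def by simp
qed

lemma in_span_Inl:
  fixes x :: "real^('m::finite+unit)"
  assumes "x $ Inr () = 0"
  shows "x \<in> span ((\<lambda>i. axis (Inl i) 1) ` (UNIV::'m set))"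
proof -
  have "x = (\<Sum>a\<in>UNIV. x $ Inl a *\<^sub>R axis (Inl a) 1)"
  proof (subst vec_eq_iff, rule allI)
    fix k :: "'m + unit"
    show "x $ k = (\<Sum>a\<in>UNIV. x $ Inl a *\<^sub>R axis (Inl a) 1) $ k"
    proof (cases k)
      case (Inl b)
      have "(\<Sum>xa\<in>UNIV. x $ Inl xa * (if b = xa then 1 else 0)) = (\<Sum>xa\<in>UNIV. if b = xa then x $ Inl xa else 0)"
        by (rule sum.cong) auto
      then show ?thesis using Inl by (simp add: sum_component axis_def)
    next
      case (Inr u)
      then show ?thesis using assms by (simp add: sum_component axis_def)
    qed
  qed
  also have "\<dots> \<in> span ((\<lambda>i. axis (Inl i) 1) ` (UNIV::'m set))"
    by (intro span_sum span_scale span_base) auto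
  finally show ?thesis .
qed

lemma span_img:
  fixes g :: "'m::finite matd"
  shows "span ((\<lambda>i. g *v axis (Inl i) 1) ` (UNIV::'m set)) = (\<lambda>x. g *v x) ` span ((\<lambda>i. axis (Inl i) 1) ` (UNIV::'m set))"
proof -
  have "(\<lambda>i. g *v axis (Inl i) 1) ` (UNIV::'m set) = (\<lambda>x. g *v x) ` ((\<lambda>i. axis (Inl i) 1) ` UNIV)"
    by (simp add: image_image)
  then show ?thesis using span_linear_image[OF matrix_vector_mul_linear[of g]] by simp
qed

lemma hyp_in:
  fixes g :: "'m::finite matd"
  assumes "x $ Inr () = 0"
  shows "g *v x \<in> span ((\<lambda>i. g *v axis (Inl i) 1) ` (UNIV::'m set))"
  unfolding span_img using in_span_Inl[OF assms] by blast

lemma hyp_out: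
  fixes g :: "'m::finite matd"
  assumes "det g \<noteq> 0" "v \<in> span ((\<lambda>i. g *v axis (Inl i) 1) ` (UNIV::'m set))"
  shows "(matrix_inv g *v v) $ Inr () = 0"
proof -
  obtain x where x: "x \<in> span ((\<lambda>i. axis (Inl i) 1) ` (UNIV::'m set))" "v = g *v x"
    using assms(2) unfolding span_img by blast
  have "matrix_inv g *v v = x" using x(2) by (simp add: matrix_vector_mul_assoc minv assms(1))
  then show ?thesis using x(1) span_Inl_sub by auto
qed

lemma Lambda0_Inr: "v \<in> Lambda0 \<Longrightarrow> v $ Inr () = 0"
  unfolding Lambda0_def by (auto simp: sum_component axis_def)

lemma axis_Lambda0: "axis (Inl i) 1 \<in> (Lambda0 :: (real^('m::finite+unit)) set)"
proof -
  have "(\<Sum>j\<in>UNIV. real_of_int (if j = i then 1 else 0) *\<^sub>R axis (Inl j) (1::real)) = axis (Inl i) 1"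
    by (simp add: if_distrib if_distribR cong: if_cong)
  then show ?thesis unfolding Lambda0_def
    by (intro CollectI exI[of _ "\<lambda>j. if j = i then 1 else 0"]) (simp only: simp_thms eq_commute[of "axis (Inl i) 1"])
qed

lemma ub_vec:
  fixes A :: "'m::finite matd"
  assumes "\<forall>j. A $ Inr () $ Inl j = 0" "v $ Inr () = 0"
  shows "(A *v v) $ Inr () = 0"
  using assms unfolding matrix_vector_mult_def by (simp add: sum_plus_unit)

lemma mv_axis: "((A::real^'n::finite^'k::finite) *v axis j 1) $ i = A $ i $ j"
  by (simp add: matrix_vector_mult_basis column_def)

lemma part1:
  fixes g :: "'m::finite matd"
  assumes g: "g \<in> SL"
  defines "Hyp \<equiv> span ((\<lambda>i. g *v axis (Inl i) 1) ` (UNIV :: 'm set))"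
  shows "XP Hyp = {lcoset (g ** p) Qgrp | p. p \<in> Pgrp}"
proof
  have dg: "det g = 1" using g unfolding SL_def by simp
  have P: "mgroup (Pgrp::'m matd set)" and Q: "mgroup (Qgrp::'m matd set)" by (rule mgroup_P, rule mgroup_Q)
  show "{lcoset (g ** p) Qgrp | p. p \<in> Pgrp} \<subseteq> XP Hyp"
  proof
    fix c assume "c \<in> {lcoset (g ** p) Qgrp | p. p \<in> Pgrp}"
    then obtain p where p: "p \<in> Pgrp" "c = lcoset (g ** p) Qgrp" by auto
    have dp: "det p = 1" using p unfolding Pgrp_iff by simp
    have gpSL: "g ** p \<in> SL" using dg dp unfolding SL_def by (simp add: det_mul)
    then have ct: "c \<in> topspace Xdd" unfolding topspace_Xdd p by blast
    define h where "h = (SOME h. h \<in> c)"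
    have "g ** p \<in> c" using p lcoset_self[OF Q] by simp
    then have hc: "h \<in> c" unfolding h_def by (rule someI)
    then obtain q where q: "q \<in> Qgrp" "h = g ** p ** q" using p(2) by (auto elim: lcoset_memE)
    have pq: "p ** q \<in> Pgrp" using P p q unfolding mgroup_def Qgrp_iff by blast
    have "L \<subseteq> Hyp" if Lc: "L \<in> ident c" for L
    proof
      fix w assume w: "w \<in> L"
      obtain \<alpha> where L: "L = (\<lambda>v. \<alpha> *\<^sub>R v) ` ((\<lambda>v. h *v v) ` Lambda0)"
        using Lc unfolding ident_def hclass_def h_def by auto
      obtain v where v: "v \<in> Lambda0" "w = \<alpha> *\<^sub>R (h *v v)" using w L by auto
      have "((p ** q) *v v) $ Inr () = 0"
        using pq Lambda0_Inr[OF v(1)] unfolding Pgrp_iff by (intro ub_vec) auto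
      then have "g *v ((p ** q) *v v) \<in> Hyp" unfolding Hyp_def by (rule hyp_in)
      then have "h *v v \<in> Hyp" unfolding q(2) by (simp add: matrix_vector_mul_assoc matrix_mul_assoc)
      then show "w \<in> Hyp" unfolding v(2) Hyp_def by (rule span_scale)
    qed
    then show "c \<in> XP Hyp" unfolding XP_def using ct by auto
  qed
  show "XP Hyp \<subseteq> {lcoset (g ** p) Qgrp | p. p \<in> Pgrp}"
  proof
    fix c assume c: "c \<in> XP Hyp"
    then have "c \<in> topspace Xdd" unfolding XP_def by auto
    then obtain h0 where h0: "h0 \<in> SL" "c = lcoset h0 Qgrp" unfolding topspace_Xdd by auto
    define h where "h = (SOME h. h \<in> c)"
    have "h0 \<in> c" using h0 lcoset_self[OF Q] by simp
    then have hc: "h \<in> c" unfolding h_def by (rule someI)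
    then obtain q where q: "q \<in> Qgrp" "h = h0 ** q" using h0(2) by (auto elim: lcoset_memE)
    have dq: "det q = 1" using q unfolding Qgrp_iff Pgrp_iff by simp
    have dh: "det h = 1" using h0 dq unfolding q(2) SL_def by (simp add: det_mul)
    have ch: "c = lcoset h Qgrp" using lcoset_mem[OF Q, of h h0] hc h0(2) by simp
    have "(\<lambda>v. 1 *\<^sub>R v) ` ((\<lambda>v. h *v v) ` Lambda0) \<in> ident c"
      unfolding ident_def hclass_def h_def by (intro CollectI exI[of _ "1::real"]) simp
    then have sub: "(\<lambda>v. 1 *\<^sub>R v) ` ((\<lambda>v. h *v v) ` Lambda0) \<subseteq> Hyp"
      using c unfolding XP_def by auto
    define p where "p = matrix_inv g ** h"
    have "p $ Inr () $ Inl i = 0" for i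
    proof -
      have "h *v axis (Inl i) 1 \<in> Hyp" using sub axis_Lambda0[of i] by auto
      then have "(matrix_inv g *v (h *v axis (Inl i) 1)) $ Inr () = 0"
        unfolding Hyp_def using dg by (intro hyp_out) auto
      then show ?thesis unfolding p_def by (simp add: matrix_vector_mul_assoc mv_axis)
    qed
    moreover have "det p = 1" unfolding p_def using dg dh by (simp add: det_mul det_minv)
    ultimately have pP: "p \<in> Pgrp" unfolding Pgrp_iff by simp
    have "g ** p = h" unfolding p_def using dg by (simp add: matrix_mul_assoc minv)
    then show "c \<in> {lcoset (g ** p) Qgrp | p. p \<in> Pgrp}" using ch pP by auto
  qed
qed

lemma phi_eq:
  fixes g :: "'m::finite matd" and m :: "'m mat1"
  assumes g: "det g \<noteq> 0" and m: "det m \<noteq> 0"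
  shows "phi g (lcoset m Hgrp) = lcoset (g ** blockdiag m) Qgrp"
proof -
  have H: "mgroup (Hgrp :: 'm mat1 set)" by (rule mgroup_H)
  define m' where "m' = (SOME m'. m' \<in> lcoset m Hgrp)"
  have "m \<in> lcoset m Hgrp" by (rule lcoset_self[OF H])
  then have "m' \<in> lcoset m Hgrp" unfolding m'_def by (rule someI)
  then obtain x where x: "x \<in> Hgrp" "m' = m ** x" by (rule lcoset_memE)
  have dx: "det x \<noteq> 0" "matrix_inv x \<in> Hgrp" using H x unfolding mgroup_def by auto
  have dm': "det m' \<noteq> 0" using x dx m by (simp add: det_mul)
  have "matrix_inv (ulblock (blockdiag m')) ** ulblock (blockdiag m) = matrix_inv x"
    unfolding bd_ul x(2) using m dx by (simp add: minv_mult matrix_mul_assoc[symmetric] minv)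
  then have "lcoset (g ** blockdiag m') Qgrp = lcoset (g ** blockdiag m) Qgrp"
    using KEY[OF g bd_P[OF dm'] bd_P[OF m]] dx by simp
  then show ?thesis unfolding phi_def m'_def by simp
qed

lemma XP_rep:
  fixes g :: "'m::finite matd"
  assumes g: "g \<in> SL"
    and c: "c \<in> XP (span ((\<lambda>i. g *v axis (Inl i) 1) ` (UNIV :: 'm set)))"
  shows "\<exists>p\<in>Pgrp. (SOME h. h \<in> c) = g ** p \<and> c = lcoset (g ** p) Qgrp"
proof -
  have P: "mgroup (Pgrp::'m matd set)" and Q: "mgroup (Qgrp::'m matd set)" by (rule mgroup_P, rule mgroup_Q)
  obtain p0 where p0: "p0 \<in> Pgrp" "c = lcoset (g ** p0) Qgrp" using c part1[OF g] by auto
  define h where "h = (SOME h. h \<in> c)"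
  have "g ** p0 \<in> c" using p0 lcoset_self[OF Q] by simp
  then have hc: "h \<in> c" unfolding h_def by (rule someI)
  then obtain q where q: "q \<in> Qgrp" "h = g ** p0 ** q" using p0(2) by (auto elim: lcoset_memE)
  have pq: "p0 ** q \<in> Pgrp" using P p0 q unfolding mgroup_def Qgrp_iff by blast
  have "c = lcoset h Qgrp" using lcoset_mem[OF Q hc[unfolded p0(2)]] p0(2) by simp
  then show ?thesis using pq q(2) unfolding h_def by (auto simp: matrix_mul_assoc intro!: bexI[of _ "p0 ** q"])
qed

definition psi :: "'m::finite matd \<Rightarrow> 'm matd set \<Rightarrow> 'm mat1 set" where
  "psi g c = lcoset (ulblock (matrix_inv g ** (SOME h. h \<in> c))) Hgrp"

lemma cont_phi:
  fixes g :: "'m::finite matd"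
  assumes g: "g \<in> SL"
  shows "continuous_map (Xlow :: 'm mat1 set topology) Xdd (phi g)"
  unfolding Xlow_def
proof (rule cont_from_quot)
  have dg: "det g = 1" using g unfolding SL_def by simp
  have c1: "continuous_map (top_of_set GLR) (top_of_set SL) (\<lambda>m::'m mat1. g ** blockdiag m)"
    unfolding continuous_map_subtopology_eu
  proof
    show "continuous_on GLR (\<lambda>m::'m mat1. g ** blockdiag m)" by (rule cont_g_bd)
    show "(\<lambda>m::'m mat1. g ** blockdiag m) \<in> GLR \<rightarrow> SL"
    proof (rule Pi_I)
      fix m :: "'m mat1" assume "m \<in> GLR"
      then have "blockdiag m \<in> Pgrp" by (simp add: bd_P)
      then have "det (blockdiag m) = 1" by (simp add: Pgrp_iff)
      then show "g ** blockdiag m \<in> SL" using dg by (simp add: SL_def det_mul)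
    qed
  qed
  have "continuous_map (top_of_set GLR) Xdd (\<lambda>m::'m mat1. lcoset (g ** blockdiag m) Qgrp)"
    using continuous_map_compose[OF c1 cont_quot[of "top_of_set SL" "\<lambda>h. lcoset h Qgrp"]]
    unfolding Xdd_def by (simp add: o_def)
  then show "continuous_map (top_of_set GLR) Xdd (\<lambda>m::'m mat1. phi g (lcoset m Hgrp))"
    by (rule continuous_map_eq) (simp add: phi_eq dg)
qed

lemma part2:
  fixes g :: "'m::finite matd"
  assumes g: "g \<in> SL"
  defines "Hyp \<equiv> span ((\<lambda>i. g *v axis (Inl i) 1) ` (UNIV :: 'm set))"
  shows "homeomorphic_map (Xlow :: 'm mat1 set topology) (subtopology Xdd (XP Hyp)) (phi g)"
proof -
  have dg: "det g = 1" using g unfolding SL_def by simp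
  have H: "mgroup (Hgrp :: 'm mat1 set)" by (rule mgroup_H)
  have Q: "mgroup (Qgrp :: 'm matd set)" by (rule mgroup_Q)
  have XPsub: "XP Hyp \<subseteq> topspace Xdd" unfolding XP_def by auto
  have tsub: "topspace (subtopology Xdd (XP Hyp)) = XP Hyp"
    using XPsub by (simp add: topspace_subtopology Int_absorb1)
  have rep: "\<exists>p\<in>Pgrp. (SOME h. h \<in> c) = g ** p \<and> c = lcoset (g ** p) Qgrp" if "c \<in> XP Hyp" for c
    using XP_rep[OF g] that unfolding Hyp_def by blast
  have psi_rep: "psi g c = lcoset (ulblock p) Hgrp" if "(SOME h. h \<in> c) = g ** p" for c p
    unfolding psi_def that using dg by (simp add: matrix_mul_assoc minv)
  have phi_in: "phi g c \<in> XP Hyp" if cX: "c \<in> topspace Xlow" for c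
  proof -
    obtain m where m: "m \<in> GLR" "c = lcoset m Hgrp" using cX unfolding topspace_Xlow by auto
    show ?thesis unfolding Hyp_def part1[OF g] m(2) using phi_eq[of g m] dg m(1) bd_P[of m] by auto
  qed
  have c1: "continuous_map Xlow (subtopology Xdd (XP Hyp)) (phi g)"
    by (rule continuous_map_into_subtopology[OF cont_phi[OF g]]) (use phi_in in auto)
  have inv1: "psi g (phi g c) = c" if cX: "c \<in> topspace Xlow" for c
  proof -
    obtain m where m: "m \<in> GLR" "c = lcoset m Hgrp" using cX unfolding topspace_Xlow by auto
    obtain p where p: "p \<in> Pgrp" "(SOME h. h \<in> phi g c) = g ** p" "phi g c = lcoset (g ** p) Qgrp"
      using rep[OF phi_in[OF cX]] by auto
    have "lcoset (g ** p) Qgrp = lcoset (g ** blockdiag m) Qgrp"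
      using p(3) phi_eq[of g m] dg m by simp
    then have "matrix_inv (ulblock p) ** m \<in> Hgrp"
      using KEY[of g p "blockdiag m"] dg p(1) bd_P[of m] m(1) by (simp add: bd_ul)
    moreover have "det (ulblock p) \<noteq> 0" using p(1) unfolding Pgrp_def by simp
    ultimately have "lcoset (ulblock p) Hgrp = lcoset m Hgrp" using lcoset_eq_iff[OF H] by blast
    then show ?thesis using psi_rep[OF p(2)] m(2) by simp
  qed
  have inv2: "phi g (psi g c) = c" if cX: "c \<in> XP Hyp" for c
  proof -
    obtain p where p: "p \<in> Pgrp" "(SOME h. h \<in> c) = g ** p" "c = lcoset (g ** p) Qgrp"
      using rep[OF cX] by auto
    have du: "det (ulblock p) \<noteq> 0" using p(1) unfolding Pgrp_def by simp
    have "matrix_inv (ulblock (blockdiag (ulblock p))) ** ulblock p = mat 1"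
      by (simp add: bd_ul minv du)
    then have "lcoset (g ** blockdiag (ulblock p)) Qgrp = lcoset (g ** p) Qgrp"
      using KEY[of g "blockdiag (ulblock p)" p] dg p(1) bd_P[OF du] H unfolding mgroup_def by simp
    then show ?thesis using psi_rep[OF p(2)] phi_eq[of g "ulblock p"] dg du p(3) by simp
  qed
  have c2: "continuous_map (subtopology Xdd (XP Hyp)) Xlow (psi g)"
    unfolding continuous_map_def tsub
  proof (intro conjI allI impI)
    show "psi g \<in> XP Hyp \<rightarrow> topspace Xlow"
    proof
      fix c assume "c \<in> XP Hyp"
      then obtain p where p: "p \<in> Pgrp" "(SOME h. h \<in> c) = g ** p" using rep by blast
      then show "psi g c \<in> topspace Xlow"
        unfolding topspace_Xlow psi_rep[OF p(2)] using p(1) unfolding Pgrp_def by auto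
    qed
    fix W assume W: "openin (Xlow :: 'm mat1 set topology) W"
    define Og where "Og = {m \<in> (GLR::'m mat1 set). lcoset m Hgrp \<in> W}"
    have "openin (top_of_set GLR) Og"
      using W unfolding Xlow_def openin_quot Og_def by simp
    then obtain T where T: "open T" "Og = GLR \<inter> T" unfolding openin_open by blast
    have Oinv: "m ** x \<in> Og" if "m \<in> Og" "x \<in> Hgrp" for m x
    proof -
      have "det (m ** x) \<noteq> 0" using that H_det[of x] unfolding Og_def by (simp add: det_mul)
      moreover have "lcoset (m ** x) Hgrp = lcoset m Hgrp" by (rule lcoset_right[OF H that(2)])
      ultimately show ?thesis using that unfolding Og_def by simp
    qed
    define F where "F h = ulblock (matrix_inv g ** h)" for h :: "'m matd"
    define S where "S = {h \<in> SL. F h \<in> Og}"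
    have "openin (top_of_set SL) S"
      unfolding openin_open
    proof (intro exI conjI)
      have "continuous_on UNIV F" unfolding F_def by (rule cont_ulb)
      moreover have "open (T \<inter> GLR)" using T(1) open_GLR by auto
      ultimately show "open (F -` (T \<inter> GLR))"
        using continuous_on_open_vimage[of UNIV F] by auto
      show "S = SL \<inter> F -` (T \<inter> GLR)" unfolding S_def T(2) by auto
    qed
    define V where "V = (\<lambda>h. lcoset h Qgrp) ` S"
    have pre: "{h \<in> SL. lcoset h Qgrp \<in> V} = S"
    proof
      show "S \<subseteq> {h \<in> SL. lcoset h Qgrp \<in> V}" unfolding V_def S_def by auto
      show "{h \<in> SL. lcoset h Qgrp \<in> V} \<subseteq> S"
      proof
        fix h assume h: "h \<in> {h \<in> SL. lcoset h Qgrp \<in> V}"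
        then obtain h' where h': "h' \<in> S" "lcoset h Qgrp = lcoset h' Qgrp" unfolding V_def by auto
        have "h \<in> lcoset h' Qgrp" using h'(2) lcoset_self[OF Q, of h] by simp
        then obtain q where q: "q \<in> Qgrp" "h = h' ** q" by (rule lcoset_memE)
        have zq: "\<forall>j. q $ Inr () $ Inl j = 0" using q unfolding Qgrp_iff Pgrp_iff by simp
        have "F h = F h' ** ulblock q"
          unfolding F_def q(2) matrix_mul_assoc by (rule ulblock_mult[OF zq])
        moreover have "ulblock q \<in> Hgrp" using q unfolding Qgrp_iff by simp
        ultimately have "F h \<in> Og" using Oinv h'(1) unfolding S_def by simp
        then show "h \<in> S" using h unfolding S_def by simp
      qed
    qed
    have Vopen: "openin Xdd V"
      unfolding Xdd_def openin_quot using pre \<open>openin (top_of_set SL) S\<close>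
      unfolding V_def S_def by auto
    have "{c \<in> XP Hyp. psi g c \<in> W} = V \<inter> XP Hyp"
    proof (intro set_eqI iffI)
      fix c assume c: "c \<in> {c \<in> XP Hyp. psi g c \<in> W}"
      then obtain p where p: "p \<in> Pgrp" "(SOME h. h \<in> c) = g ** p" "c = lcoset (g ** p) Qgrp"
        using rep by blast
      have "g ** p \<in> SL" using p(1) dg unfolding Pgrp_iff SL_def by (simp add: det_mul)
      moreover have "F (g ** p) = ulblock p" unfolding F_def using dg by (simp add: matrix_mul_assoc minv)
      moreover have "ulblock p \<in> Og" using c p(1) psi_rep[OF p(2)] unfolding Og_def Pgrp_def by auto
      ultimately have "g ** p \<in> S" unfolding S_def by simp
      then show "c \<in> V \<inter> XP Hyp" using c p(3) unfolding V_def by auto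
    next
      fix c assume c: "c \<in> V \<inter> XP Hyp"
      then obtain p where p: "p \<in> Pgrp" "(SOME h. h \<in> c) = g ** p" "c = lcoset (g ** p) Qgrp"
        using rep by blast
      have "g ** p \<in> SL" using p(1) dg unfolding Pgrp_iff SL_def by (simp add: det_mul)
      then have "g ** p \<in> S" using pre c p(3) by auto
      moreover have "F (g ** p) = ulblock p" unfolding F_def using dg by (simp add: matrix_mul_assoc minv)
      ultimately have "ulblock p \<in> Og" unfolding S_def by simp
      then show "c \<in> {c \<in> XP Hyp. psi g c \<in> W}" using c psi_rep[OF p(2)] unfolding Og_def by auto
    qed
    then show "openin (subtopology Xdd (XP Hyp)) {c \<in> XP Hyp. psi g c \<in> W}"
      unfolding openin_subtopology using Vopen by blast
  qed
  have "homeomorphic_maps Xlow (subtopology Xdd (XP Hyp)) (phi g) (psi g)"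
    unfolding homeomorphic_maps_def tsub using c1 c2 inv1 inv2 by blast
  then show ?thesis unfolding homeomorphic_map_maps by blast
qed

lemma meas_cont:
  assumes "continuous_map X Y f"
  shows "f \<in> measurable (borel_of_top X) (borel_of_top Y)"
  unfolding borel_of_top_def
proof (rule measurable_measure_of)
  show "{U. openin Y U} \<subseteq> Pow (topspace Y)" using openin_subset by auto
  show "f \<in> space (sigma (topspace X) {U. openin X U}) \<rightarrow> topspace Y"
    using assms unfolding space_measure_of_conv continuous_map_def by auto
  fix U assume "U \<in> {U. openin Y U}"
  then have o: "openin X {x \<in> topspace X. f x \<in> U}" using assms unfolding continuous_map_def by auto
  have e: "f -` U \<inter> space (sigma (topspace X) {U. openin X U}) = {x \<in> topspace X. f x \<in> U}"
    unfolding space_measure_of_conv by auto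
  have "{U. openin X U} \<subseteq> Pow (topspace X)" using openin_subset by auto
  then show "f -` U \<inter> space (sigma (topspace X) {U. openin X U}) \<in> sets (sigma (topspace X) {U. openin X U})"
    unfolding e using o by (simp add: sets_measure_of sigma_sets.Basic)
qed

lemma cont_lcoset:
  fixes m0 :: "real^'n::finite^'n"
  assumes m0: "m0 \<in> GLR"
  shows "continuous_map (Xlow :: (real^'n^'n) set topology) Xlow (lcoset m0)"
  unfolding Xlow_def
proof (rule cont_from_quot)
  have c1: "continuous_map (top_of_set GLR) (top_of_set GLR) (\<lambda>m::real^'n^'n. m0 ** m)"
    unfolding continuous_map_subtopology_eu
    using cont_lmult m0 by (auto simp: det_mul)
  have "continuous_map (top_of_set GLR) (quot_top (top_of_set GLR) (\<lambda>m. lcoset m Hgrp))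
          (\<lambda>m::real^'n^'n. lcoset (m0 ** m) Hgrp)"
    using continuous_map_compose[OF c1 cont_quot[of "top_of_set GLR" "\<lambda>h. lcoset h Hgrp"]]
    by (simp add: o_def)
  then show "continuous_map (top_of_set GLR) (quot_top (top_of_set GLR) (\<lambda>m. lcoset m Hgrp))
          (\<lambda>m::real^'n^'n. lcoset m0 (lcoset m Hgrp))"
    by (simp add: lcoset_lcoset)
qed

lemma part3:
  fixes g g' :: "'m::finite matd" and \<mu> :: "'m mat1 set measure"
  assumes g: "g \<in> SL" and g': "g' \<in> SL" and gg: "lcoset g Pgrp = lcoset g' Pgrp"
    and sets: "sets \<mu> = sets (borel_of_top Xlow)" and sp: "space \<mu> = topspace Xlow"
    and inv: "\<forall>h \<in> GLR. distr \<mu> \<mu> (\<lambda>c. lcoset h c) = \<mu>"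
  shows "distr \<mu> (borel_of_top Xdd) (phi g) = distr \<mu> (borel_of_top Xdd) (phi g')"
proof -
  have P: "mgroup (Pgrp::'m matd set)" by (rule mgroup_P)
  have dg: "det g = 1" using g unfolding SL_def by simp
  have H1: "(mat 1 :: 'm mat1) \<in> Hgrp" using mgroup_H unfolding mgroup_def by blast
  have "g' \<in> lcoset g Pgrp" using gg lcoset_self[OF P, of g'] by simp
  then obtain p0 where p0: "p0 \<in> Pgrp" "g' = g ** p0" by (rule lcoset_memE)
  define m0 where "m0 = ulblock p0"
  have dm0: "det m0 \<noteq> 0" using p0 unfolding m0_def Pgrp_def by simp
  have eq: "phi g' c = phi g (lcoset m0 c)" if c: "c \<in> space \<mu>" for c
  proof -
    obtain m where m: "m \<in> GLR" "c = lcoset m Hgrp" using c unfolding sp topspace_Xlow by auto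
    have dmm: "det (m0 ** m) \<noteq> 0" using dm0 m by (simp add: det_mul)
    have l: "lcoset m0 c = lcoset (m0 ** m) Hgrp" unfolding m(2) lcoset_lcoset ..
    have X: "p0 ** blockdiag m \<in> Pgrp" using P p0(1) bd_P[of m] m(1) unfolding mgroup_def by auto
    have u: "ulblock (p0 ** blockdiag m) = m0 ** m"
      unfolding m0_def using ulblock_mult[OF bd_ub] bd_ul by metis
    have "matrix_inv (ulblock (p0 ** blockdiag m)) ** ulblock (blockdiag (m0 ** m)) = mat 1"
      unfolding u bd_ul by (simp add: minv dmm)
    then have "lcoset (g ** (p0 ** blockdiag m)) Qgrp = lcoset (g ** blockdiag (m0 ** m)) Qgrp"
      using KEY[OF _ X bd_P[OF dmm], of g] dg H1 by simp
    then show ?thesis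
      unfolding l m(2) using phi_eq[of g' m] phi_eq[of g "m0 ** m"] dg dmm m(1) g'
      unfolding SL_def p0(2) by (simp add: matrix_mul_assoc lcoset_lcoset)
  qed
  have mc: "measurable \<mu> N = measurable (borel_of_top Xlow) N" for N :: "'x measure"
    by (rule measurable_cong_sets[OF sets refl])
  have mphi: "phi g \<in> measurable \<mu> (borel_of_top Xdd)"
    unfolding mc by (rule meas_cont[OF cont_phi[OF g]])
  have ml: "lcoset m0 \<in> measurable \<mu> \<mu>"
    unfolding measurable_cong_sets[OF sets sets] by (rule meas_cont[OF cont_lcoset]) (simp add: dm0)
  have "distr \<mu> (borel_of_top Xdd) (phi g') = distr \<mu> (borel_of_top Xdd) (phi g \<circ> lcoset m0)"
    by (rule distr_cong) (simp_all add: eq)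
  also have "\<dots> = distr (distr \<mu> \<mu> (lcoset m0)) (borel_of_top Xdd) (phi g)"
    by (rule distr_distr[symmetric, OF mphi ml])
  also have "distr \<mu> \<mu> (lcoset m0) = \<mu>" using inv dm0 by auto
  finally show ?thesis by simp
qed

theorem lemma2p1:
  fixes g :: "'m::finite matd"
  assumes g: "g \<in> SL"
  defines "Hyp \<equiv> span ((\<lambda>i. g *v axis (Inl i) 1) ` (UNIV :: 'm set))"
  shows "XP Hyp = {lcoset (g ** p) Qgrp | p. p \<in> Pgrp}
    \<and> homeomorphic_map (Xlow :: 'm mat1 set topology) (subtopology Xdd (XP Hyp)) (phi g)
    \<and> (\<forall>(g' :: 'm matd) (\<mu> :: 'm mat1 set measure).
           g' \<in> SL \<longrightarrow> lcoset g Pgrp = lcoset g' Pgrp \<longrightarrow>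
           prob_space \<mu> \<longrightarrow> sets \<mu> = sets (borel_of_top Xlow) \<longrightarrow>
           space \<mu> = topspace Xlow \<longrightarrow>
           (\<forall>h \<in> GLR. distr \<mu> \<mu> (\<lambda>c. lcoset h c) = \<mu>) \<longrightarrow>
           distr \<mu> (borel_of_top Xdd) (phi g) = distr \<mu> (borel_of_top Xdd) (phi g'))"
  using part1[OF g] part2[OF g] part3[OF g] unfolding Hyp_def by blast

end
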